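(* Let $\mathcal{C}$ be an $[n,k]_q$ code and fix $i\in\{1,\dots,q-1\}$. There exists a non-zero vector $r=(r_1,\dots,r_{q-1})\in\mathbb{N}^{q-1}$ such that $$\sum_{j=1}^{q-1} r_j\left(a[\alpha^{i-j}]-b[\alpha^{i-j}]\right)\neq 0\quad\text{for all } a,b\in\mathcal{C} \text{ with } a\ne b$$ if and only if $V(a)\neq V(b)$ for all $a,b\in\mathcal{C}$ with $a\neq b$.
   Context: $q$ is a prime power, $\alpha$ a fixed primitive element of $\mathbb{F}_q$ (exponents of $\alpha$ are taken modulo $q-1$), $\mathbb{N}=\{0,1,2,\dots\}$. An $[n,k]_q$ code is a $k$-dimensional subspace of $\mathbb{F}_q^n$. For $c\in\mathbb{F}_q^n$ and $\beta\in\mathbb{F}_q$, $c[\beta]=|\{l: c_l=\beta\}|$, and $V(c)=(c[\alpha],c[\alpha^2],\dots,c[\alpha^{q-1}],c[0])$. *)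

theory Defs
  imports "HOL-Analysis.Analysis"
begin

definition primitive_elem :: "'a::{finite,field} \<Rightarrow> bool" where
  "primitive_elem \<alpha> \<longleftrightarrow> \<alpha> \<noteq> 0 \<and> (\<forall>x. x \<noteq> 0 \<longrightarrow> (\<exists>j::nat. x = \<alpha> ^ j))"

definition cnt :: "'a ^ 'n \<Rightarrow> 'a \<Rightarrow> nat" where
  "cnt c \<beta> = card {l. c $ l = \<beta>}"

definition Vvec :: "'a::{finite,field} \<Rightarrow> 'a ^ 'n \<Rightarrow> nat list" where
  "Vvec \<alpha> c = map (\<lambda>j. cnt c (\<alpha> ^ j)) [1..<CARD('a)] @ [cnt c 0]"

text \<open>An [n,k]_q code: a k-dimensional subspace of F_q^n (n = CARD('n)).\<close>
definition is_code :: "nat \<Rightarrow> ('a::field ^ 'n) set \<Rightarrow> bool" where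
  "is_code k C \<longleftrightarrow> vec.subspace C \<and> vec.dim C = k"

end

theory Submission imports Defs begin

lemma base_lemma:
  fixes N :: nat and d :: "nat \<Rightarrow> int"
  assumes "\<forall>j<n. \<bar>d j\<bar> \<le> int N" "\<exists>j<n. d j \<noteq> 0"
  shows "(\<Sum>j<n. int ((2*N+1)^j) * d j) \<noteq> 0"
  using assms
proof (induction n arbitrary: d)
  case 0 then show ?case by auto
next
  case (Suc n)
  define S where "S = (\<Sum>j<n. int ((2*N+1)^j) * d (Suc j))"
  have eq: "(\<Sum>j<Suc n. int ((2*N+1)^j) * d j) = d 0 + int (2*N+1) * S"
    unfolding S_def sum.lessThan_Suc_shift by (simp add: sum_distrib_left algebra_simps)
  show ?case
  proof (cases "\<exists>j<n. d (Suc j) \<noteq> 0")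
    case True
    have "S \<noteq> 0" unfolding S_def using Suc.IH[of "\<lambda>j. d (Suc j)"] Suc.prems True by auto
    hence "\<bar>int (2*N+1) * S\<bar> \<ge> int (2*N+1)"
      by (simp add: abs_mult)
    moreover have "\<bar>d 0\<bar> \<le> int N" using Suc.prems by auto
    ultimately show ?thesis unfolding eq by linarith
  next
    case False
    hence "S = 0" unfolding S_def by auto
    moreover have "d 0 \<noteq> 0" using Suc.prems False
      by (metis less_Suc_eq_0_disj)
    ultimately show ?thesis unfolding eq by simp
  qed
qed

lemma cnt_sum:
  fixes c :: "'a::finite ^ 'n"
  shows "(\<Sum>x\<in>UNIV. cnt c x) = CARD('n)"
proof -
  have "UNIV = (\<Union>x\<in>UNIV. {l. c $ l = x})" by auto
  hence "CARD('n) = card (\<Union>x\<in>UNIV. {l. c $ l = x})" by simp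
  also have "\<dots> = (\<Sum>x\<in>UNIV. card {l. c $ l = x})"
    by (rule card_UN_disjoint) auto
  finally show ?thesis unfolding cnt_def by simp
qed

lemma cnt_le: "cnt c x \<le> CARD('n)" for c :: "'a ^ 'n"
  unfolding cnt_def by (rule card_mono) auto

lemma card_nz: "card (UNIV - {0::'a::{finite,field}}) = CARD('a) - 1"
  by (simp add: card_Diff_singleton)

lemma ord_ge:
  fixes \<alpha> :: "'a::{finite,field}"
  assumes "primitive_elem \<alpha>" "1 \<le> d" "\<alpha> ^ d = 1"
  shows "CARD('a) - 1 \<le> d"
proof -
  have "UNIV - {0} \<subseteq> (\<lambda>j. \<alpha> ^ j) ` {..<d}"
  proof
    fix x assume "x \<in> UNIV - {0::'a}"
    then obtain j where j: "x = \<alpha> ^ j" using assms(1) unfolding primitive_elem_def by auto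
    have e1: "\<alpha> ^ (d * (j div d)) = 1" by (simp add: power_mult assms(3))
    have "\<alpha> ^ j = \<alpha> ^ (d * (j div d) + j mod d)" by (simp only: mult_div_mod_eq)
    hence "\<alpha> ^ j = \<alpha> ^ (d * (j div d)) * \<alpha> ^ (j mod d)" by (simp only: power_add)
    hence "\<alpha> ^ j = \<alpha> ^ (j mod d)" by (simp only: e1 mult_1)
    moreover have "j mod d < d" using assms(2) by simp
    ultimately show "x \<in> (\<lambda>j. \<alpha> ^ j) ` {..<d}" using j by blast
  qed
  hence "card (UNIV - {0::'a}) \<le> card ((\<lambda>j. \<alpha> ^ j) ` {..<d})" by (rule card_mono[rotated]) simp
  also have "\<dots> \<le> d" using card_image_le[of "{..<d}" "\<lambda>j. \<alpha> ^ j"] by simp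
  finally show ?thesis by (simp only: card_nz)
qed

lemma img_pow:
  fixes \<alpha> :: "'a::{finite,field}"
  assumes "primitive_elem \<alpha>"
  shows "(\<lambda>m. \<alpha> ^ m) ` {1..CARD('a) - 1} = UNIV - {0}"
proof -
  have a0: "\<alpha> \<noteq> 0" using assms unfolding primitive_elem_def by auto
  have "inj_on (\<lambda>m. \<alpha> ^ m) {1..CARD('a) - 1}"
  proof (rule inj_onI)
    have *: False if "a < b" "b \<le> CARD('a) - 1" "1 \<le> a" "\<alpha> ^ a = \<alpha> ^ b" for a b
    proof -
      have "\<alpha> ^ b = \<alpha> ^ a * \<alpha> ^ (b - a)" using that(1) by (simp flip: power_add)
      hence "\<alpha> ^ (b - a) = 1" using that(4) a0 by simp
      from ord_ge[OF assms _ this] that show False by (simp add: le_diff_conv2)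
    qed
    fix a b assume "a \<in> {1..CARD('a) - 1}" "b \<in> {1..CARD('a) - 1}" "\<alpha> ^ a = \<alpha> ^ b"
    then show "a = b" using *[of a b] *[of b a] by (cases "a < b"; cases "b < a") auto
  qed
  hence c: "card ((\<lambda>m. \<alpha> ^ m) ` {1..CARD('a) - 1}) = CARD('a) - 1" by (simp add: card_image)
  have "(\<lambda>m. \<alpha> ^ m) ` {1..CARD('a) - 1} \<subseteq> UNIV - {0}" using a0 by auto
  thus ?thesis using c card_nz by (metis card_subset_eq finite)
qed

lemma img_powi:
  fixes \<alpha> :: "'a::{finite,field}"
  assumes "primitive_elem \<alpha>"
  shows "(\<lambda>j. \<alpha> powi (int i - int j)) ` {1..CARD('a) - 1} = UNIV - {0}"
proof -
  have a0: "\<alpha> \<noteq> 0" using assms unfolding primitive_elem_def by auto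
  have "inj_on (\<lambda>j. \<alpha> powi (int i - int j)) {1..CARD('a) - 1}"
  proof (rule inj_onI)
    have *: False if "a < b" "b \<le> CARD('a) - 1" "1 \<le> a" "\<alpha> powi (int i - int a) = \<alpha> powi (int i - int b)" for a b
    proof -
      have "int i - int a = (int i - int b) + int (b - a)" using that(1) by simp
      hence "\<alpha> powi (int i - int a) = \<alpha> powi ((int i - int b) + int (b - a))" by (rule arg_cong)
      also have "\<dots> = \<alpha> powi (int i - int b) * \<alpha> powi (int (b - a))"
        by (rule power_int_add) (simp add: a0)
      also have "\<dots> = \<alpha> powi (int i - int b) * \<alpha> ^ (b - a)"
        by (simp only: power_int_of_nat)
      finally have p: "\<alpha> powi (int i - int b) = \<alpha> powi (int i - int b) * \<alpha> ^ (b - a)"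
        using that(4) by simp
      have nz: "\<alpha> powi (int i - int b) \<noteq> 0" using a0 by (simp add: power_int_eq_0_iff)
      have "\<alpha> ^ (b - a) = 1" using p nz by (metis mult_cancel_left1)
      from ord_ge[OF assms _ this] that show False by (simp add: le_diff_conv2)
    qed
    fix a b assume "a \<in> {1..CARD('a) - 1}" "b \<in> {1..CARD('a) - 1}"
      "\<alpha> powi (int i - int a) = \<alpha> powi (int i - int b)"
    then show "a = b" using *[of a b] *[of b a] by (cases "a < b"; cases "b < a") auto
  qed
  hence c: "card ((\<lambda>j. \<alpha> powi (int i - int j)) ` {1..CARD('a) - 1}) = CARD('a) - 1" by (simp add: card_image)
  have "(\<lambda>j. \<alpha> powi (int i - int j)) ` {1..CARD('a) - 1} \<subseteq> UNIV - {0}" using a0 by auto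
  thus ?thesis using c card_nz by (metis card_subset_eq finite)
qed

lemma cnt0:
  fixes c :: "'a::{finite,field} ^ 'n"
  shows "cnt c 0 = CARD('n) - (\<Sum>x\<in>UNIV - {0}. cnt c x)"
  using cnt_sum[of c] sum.remove[of UNIV 0 "cnt c"] by simp

lemma V_eq:
  fixes \<alpha> :: "'a::{finite,field}" and a b :: "'a ^ 'n"
  assumes "primitive_elem \<alpha>"
  shows "(Vvec \<alpha> a = Vvec \<alpha> b) \<longleftrightarrow> (\<forall>x\<in>UNIV - {0}. cnt a x = cnt b x)"
proof
  assume "Vvec \<alpha> a = Vvec \<alpha> b"
  hence "map (\<lambda>j. cnt a (\<alpha> ^ j)) [1..<CARD('a)] = map (\<lambda>j. cnt b (\<alpha> ^ j)) [1..<CARD('a)]"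
    unfolding Vvec_def by (subst (asm) append_eq_append_conv) auto
  hence h: "\<forall>m\<in>{1..CARD('a) - 1}. cnt a (\<alpha> ^ m) = cnt b (\<alpha> ^ m)"
    unfolding map_eq_conv by auto
  show "\<forall>x\<in>UNIV - {0}. cnt a x = cnt b x"
  proof
    fix x assume "x \<in> UNIV - {0::'a}"
    then obtain m where "m \<in> {1..CARD('a) - 1}" "x = \<alpha> ^ m" using img_pow[OF assms] by blast
    thus "cnt a x = cnt b x" using h by auto
  qed
next
  assume h: "\<forall>x\<in>UNIV - {0}. cnt a x = cnt b x"
  have "map (\<lambda>j. cnt a (\<alpha> ^ j)) [1..<CARD('a)] = map (\<lambda>j. cnt b (\<alpha> ^ j)) [1..<CARD('a)]"
    unfolding map_eq_conv
  proof
    fix m assume "m \<in> set [1..<CARD('a)]"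
    hence "m \<in> {1..CARD('a) - 1}" by auto
    hence "\<alpha> ^ m \<in> (\<lambda>m. \<alpha> ^ m) ` {1..CARD('a) - 1}" by blast
    hence "\<alpha> ^ m \<in> UNIV - {0}" using img_pow[OF assms] by simp
    thus "cnt a (\<alpha> ^ m) = cnt b (\<alpha> ^ m)" using h by blast
  qed
  moreover have "cnt a 0 = cnt b 0" unfolding cnt0 using h by simp
  ultimately show "Vvec \<alpha> a = Vvec \<alpha> b" unfolding Vvec_def by simp
qed

theorem mainTheorem5:
  fixes \<alpha> :: "'a::{finite,field}" and C :: "('a ^ 'n) set" and k i :: nat
  assumes "primitive_elem \<alpha>"
    and "is_code k C"
    and "1 \<le> i" and "i \<le> CARD('a) - 1"
  shows "(\<exists>r :: nat \<Rightarrow> nat. (\<exists>j\<in>{1..CARD('a) - 1}. r j \<noteq> 0) \<and>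
            (\<forall>a\<in>C. \<forall>b\<in>C. a \<noteq> b \<longrightarrow>
               (\<Sum>j = 1..CARD('a) - 1. int (r j) *
                  (int (cnt a (\<alpha> powi (int i - int j))) - int (cnt b (\<alpha> powi (int i - int j))))) \<noteq> 0))
         \<longleftrightarrow> (\<forall>a\<in>C. \<forall>b\<in>C. a \<noteq> b \<longrightarrow> Vvec \<alpha> a \<noteq> Vvec \<alpha> b)"
proof
  assume "\<exists>r :: nat \<Rightarrow> nat. (\<exists>j\<in>{1..CARD('a) - 1}. r j \<noteq> 0) \<and>
            (\<forall>a\<in>C. \<forall>b\<in>C. a \<noteq> b \<longrightarrow>
               (\<Sum>j = 1..CARD('a) - 1. int (r j) *
                  (int (cnt a (\<alpha> powi (int i - int j))) - int (cnt b (\<alpha> powi (int i - int j))))) \<noteq> 0)"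
  then obtain r :: "nat \<Rightarrow> nat" where r: "\<forall>a\<in>C. \<forall>b\<in>C. a \<noteq> b \<longrightarrow>
               (\<Sum>j = 1..CARD('a) - 1. int (r j) *
                  (int (cnt a (\<alpha> powi (int i - int j))) - int (cnt b (\<alpha> powi (int i - int j))))) \<noteq> 0"
    by blast
  show "\<forall>a\<in>C. \<forall>b\<in>C. a \<noteq> b \<longrightarrow> Vvec \<alpha> a \<noteq> Vvec \<alpha> b"
  proof (intro ballI impI notI)
    fix a b assume ab: "a \<in> C" "b \<in> C" "a \<noteq> b" "Vvec \<alpha> a = Vvec \<alpha> b"
    hence h: "\<forall>x\<in>UNIV - {0}. cnt a x = cnt b x" using V_eq[OF assms(1)] by blast
    have "\<forall>j\<in>{1..CARD('a) - 1}. cnt a (\<alpha> powi (int i - int j)) = cnt b (\<alpha> powi (int i - int j))"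
      using h img_powi[OF assms(1), of i] by blast
    hence "(\<Sum>j = 1..CARD('a) - 1. int (r j) *
                  (int (cnt a (\<alpha> powi (int i - int j))) - int (cnt b (\<alpha> powi (int i - int j))))) = 0"
      by simp
    thus False using r ab by blast
  qed
next
  assume V: "\<forall>a\<in>C. \<forall>b\<in>C. a \<noteq> b \<longrightarrow> Vvec \<alpha> a \<noteq> Vvec \<alpha> b"
  define N where "N = CARD('n)"
  define r where "r = (\<lambda>j::nat. (2*N+1)^(j - 1))"
  have Q: "1 \<le> CARD('a) - 1"
  proof -
    have "card {0::'a, 1} \<le> CARD('a)" by (rule card_mono) auto
    thus ?thesis by simp
  qed
  show "\<exists>r :: nat \<Rightarrow> nat. (\<exists>j\<in>{1..CARD('a) - 1}. r j \<noteq> 0) \<and>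
            (\<forall>a\<in>C. \<forall>b\<in>C. a \<noteq> b \<longrightarrow>
               (\<Sum>j = 1..CARD('a) - 1. int (r j) *
                  (int (cnt a (\<alpha> powi (int i - int j))) - int (cnt b (\<alpha> powi (int i - int j))))) \<noteq> 0)"
  proof (intro exI conjI ballI impI)
    show "\<exists>j\<in>{1..CARD('a) - 1}. r j \<noteq> 0" using Q unfolding r_def by auto
  next
    fix a b assume ab: "a \<in> C" "b \<in> C" "a \<noteq> b"
    define d where "d = (\<lambda>j. int (cnt a (\<alpha> powi (int i - int (Suc j)))) - int (cnt b (\<alpha> powi (int i - int (Suc j)))))"
    have "\<not> (\<forall>x\<in>UNIV - {0}. cnt a x = cnt b x)" using V ab V_eq[OF assms(1)] by blast
    then obtain x where x: "x \<in> UNIV - {0}" "cnt a x \<noteq> cnt b x" by blast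
    then obtain j where j: "j \<in> {1..CARD('a) - 1}" "x = \<alpha> powi (int i - int j)"
      using img_powi[OF assms(1), of i] by blast
    have ex: "\<exists>j<CARD('a) - 1. d j \<noteq> 0"
      using j x by (intro exI[of _ "j - 1"]) (auto simp: d_def)
    have bd: "\<forall>j<CARD('a) - 1. \<bar>d j\<bar> \<le> int N"
    proof (intro allI impI)
      fix j
      have "cnt a (\<alpha> powi (int i - int (Suc j))) \<le> N" "cnt b (\<alpha> powi (int i - int (Suc j))) \<le> N"
        unfolding N_def by (rule cnt_le)+
      thus "\<bar>d j\<bar> \<le> int N" unfolding d_def by linarith
    qed
    have "(\<Sum>j<CARD('a) - 1. int ((2*N+1)^j) * d j) \<noteq> 0" by (rule base_lemma[OF bd ex])
    moreover have "(\<Sum>j = 1..CARD('a) - 1. int (r j) *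
                  (int (cnt a (\<alpha> powi (int i - int j))) - int (cnt b (\<alpha> powi (int i - int j)))))
          = (\<Sum>j<CARD('a) - 1. int ((2*N+1)^j) * d j)"
      unfolding One_nat_def sum.atLeast1_atMost_eq by (rule sum.cong) (simp_all add: r_def d_def)
    ultimately show "(\<Sum>j = 1..CARD('a) - 1. int (r j) *
                  (int (cnt a (\<alpha> powi (int i - int j))) - int (cnt b (\<alpha> powi (int i - int j))))) \<noteq> 0"
      by argo
  qed
qed

end
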